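(* Let $\Sigma$ be a finite nonempty alphabet, $L\subseteq\Sigma^*$ and $\kappa(L)=n\ge 1$. If $L$ is a right ideal or a prefix-closed language, then $\sigma(L)\le n^{n-1}$. This bound is tight: for $n=1$ whenever $|\Sigma|\ge 1$, for $n=2$ whenever $|\Sigma|\ge 2$, for $n=3$ whenever $|\Sigma|\ge 3$, and for $n\ge 4$ whenever $|\Sigma|\ge 4$, there is a language $L$ over $\Sigma$ of the respective type with $\kappa(L)=n$ and $\sigma(L)=n^{n-1}$. Moreover, these alphabet sizes cannot be reduced: over a smaller alphabet no such language with $\kappa(L)=n$ attains $\sigma(L)=n^{n-1}$.
   Context: For a language $L\subseteq\Sigma^*$ and $w\in\Sigma^*$, the (left) quotient is $w^{-1}L=\{x\in\Sigma^*: wx\in L\}$; the quotient complexity $\kappa(L)$ is the number of distinct quotients of $L$ (equal to the number of states of a minimal DFA of $L$). The syntactic congruence of $L$ is $x\approx_L y$ iff for all $u,v\in\Sigma^*$, $uxv\in L\Leftrightarrow uyv\in L$; the syntactic semigroup is $\Sigma^+/\approx_L$, and the syntactic complexity $\sigma(L)$ is its cardinality (equivalently, the number of transformations of the state set of a minimal DFA of $L$ induced by nonempty words). A language $L$ is a right ideal if it is nonempty and $L=L\Sigma^*$. It is prefix-closed if $w\in L$ implies every prefix of $w$ is in $L$. *)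

theory Defs
  imports Main
begin

definition left_quotient :: "'a set \<Rightarrow> 'a list \<Rightarrow> 'a list set \<Rightarrow> 'a list set" where
  "left_quotient S w L = {x \<in> lists S. w @ x \<in> L}"

definition quotients :: "'a set \<Rightarrow> 'a list set \<Rightarrow> 'a list set set" where
  "quotients S L = {left_quotient S w L | w. w \<in> lists S}"

definition quot_complexity :: "'a set \<Rightarrow> 'a list set \<Rightarrow> nat" where
  "quot_complexity S L = card (quotients S L)"

definition synt_cong :: "'a set \<Rightarrow> 'a list set \<Rightarrow> ('a list \<times> 'a list) set" where
  "synt_cong S L = {(x, y). x \<in> lists S \<and> y \<in> lists S \<and>
     (\<forall>u \<in> lists S. \<forall>v \<in> lists S. (u @ x @ v \<in> L) = (u @ y @ v \<in> L))}"

text \<open>Cardinality of the syntactic semigroup: nonempty words modulo the syntactic congruence.\<close>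
definition synt_complexity :: "'a set \<Rightarrow> 'a list set \<Rightarrow> nat" where
  "synt_complexity S L = card ((lists S - {[]}) // synt_cong S L)"

definition right_ideal :: "'a set \<Rightarrow> 'a list set \<Rightarrow> bool" where
  "right_ideal S L \<longleftrightarrow> L \<noteq> {} \<and> L = {u @ v | u v. u \<in> L \<and> v \<in> lists S}"

definition prefix_closed :: "'a list set \<Rightarrow> bool" where
  "prefix_closed L \<longleftrightarrow> (\<forall>w \<in> L. \<forall>u v. w = u @ v \<longrightarrow> u \<in> L)"

end

theory Submission
  imports Defs "HOL-Library.FuncSet" "HOL-Combinatorics.Permutations"
begin


lemma lq_append:
  assumes "y \<in> lists S"
  shows "left_quotient S (x @ y) K = left_quotient S y (left_quotient S x K)"
  using assms by (auto simp: left_quotient_def)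

lemma lq_Nil: "K \<subseteq> lists S \<Longrightarrow> left_quotient S [] K = K"
  by (auto simp: left_quotient_def)

lemma lq_sub: "left_quotient S x K \<subseteq> lists S"
  by (auto simp: left_quotient_def)

lemma quot_closed:
  assumes "K \<in> quotients S L" "x \<in> lists S"
  shows "left_quotient S x K \<in> quotients S L"
proof -
  from assms obtain w where w: "w \<in> lists S" "K = left_quotient S w L"
    by (auto simp: quotients_def)
  then have "left_quotient S x K = left_quotient S (w @ x) L"
    using assms(2) by (simp add: lq_append)
  moreover have "w @ x \<in> lists S" using w assms(2) by simp
  ultimately show ?thesis unfolding quotients_def by blast
qed

lemma quot_sub: "K \<in> quotients S L \<Longrightarrow> K \<subseteq> lists S"
  by (auto simp: quotients_def left_quotient_def)

lemma synt_iff: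
  assumes "x \<in> lists S" "y \<in> lists S"
  shows "(x, y) \<in> synt_cong S L \<longleftrightarrow>
     (\<forall>K\<in>quotients S L. left_quotient S x K = left_quotient S y K)"
proof
  assume h: "(x, y) \<in> synt_cong S L"
  show "\<forall>K\<in>quotients S L. left_quotient S x K = left_quotient S y K"
  proof
    fix K assume "K \<in> quotients S L"
    then obtain u where u: "u \<in> lists S" "K = left_quotient S u L"
      by (auto simp: quotients_def)
    show "left_quotient S x K = left_quotient S y K"
      using h u by (auto simp: left_quotient_def synt_cong_def)
  qed
next
  assume h: "\<forall>K\<in>quotients S L. left_quotient S x K = left_quotient S y K"
  have "(u @ x @ v \<in> L) = (u @ y @ v \<in> L)" if "u \<in> lists S" "v \<in> lists S" for u v
  proof -
    have "left_quotient S u L \<in> quotients S L" using that by (auto simp: quotients_def)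
    then have e: "left_quotient S x (left_quotient S u L) = left_quotient S y (left_quotient S u L)"
      using h by blast
    have "v \<in> left_quotient S x (left_quotient S u L) \<longleftrightarrow> u @ x @ v \<in> L"
      using that assms by (auto simp: left_quotient_def)
    moreover have "v \<in> left_quotient S y (left_quotient S u L) \<longleftrightarrow> u @ y @ v \<in> L"
      using that assms by (auto simp: left_quotient_def)
    ultimately show ?thesis using e by simp
  qed
  then show "(x, y) \<in> synt_cong S L" using assms by (auto simp: synt_cong_def)
qed

lemma card_quotient_kernel:
  assumes R: "\<And>x y. (x, y) \<in> R \<longleftrightarrow> x \<in> B \<and> y \<in> B \<and> g x = g y" and AB: "A \<subseteq> B"
  shows "card (A // R) = card (g ` A)"
proof -
  define h where "h v = {y \<in> B. g y = v}" for v
  have RI: "R `` {x} = h (g x)" if "x \<in> A" for x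
    using that AB by (auto simp: R h_def)
  have "A // R = h ` g ` A"
    unfolding quotient_def using RI by auto
  moreover have "inj_on h (g ` A)"
  proof (rule inj_onI)
    fix v w assume "v \<in> g ` A" "w \<in> g ` A" "h v = h w"
    then obtain x where "x \<in> A" "v = g x" by auto
    then have "x \<in> h v" using AB by (auto simp: h_def)
    then show "v = w" using \<open>h v = h w\<close> by (auto simp: h_def)
  qed
  ultimately show ?thesis by (simp add: card_image)
qed

definition tr :: "'a set \<Rightarrow> 'a list set \<Rightarrow> 'a list \<Rightarrow> 'a list set \<Rightarrow> 'a list set" where
  "tr S L x = restrict (left_quotient S x) (quotients S L)"

lemma synt_complexity_eq:
  "synt_complexity S L = card (tr S L ` (lists S - {[]}))"
  unfolding synt_complexity_def
proof (rule card_quotient_kernel[where B = "lists S"])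
  fix x y
  show "((x, y) \<in> synt_cong S L) = (x \<in> lists S \<and> y \<in> lists S \<and> tr S L x = tr S L y)"
  proof (cases "x \<in> lists S \<and> y \<in> lists S")
    case True
    then show ?thesis using synt_iff[of x S y L]
      by (auto simp: tr_def restrict_def fun_eq_iff)
  next
    case False
    then show ?thesis by (auto simp: synt_cong_def)
  qed
qed auto



lemma tr_in_T:
  assumes "x \<in> lists S" "K0 \<in> quotients S L" "\<forall>x\<in>lists S. left_quotient S x K0 = K0"
  shows "tr S L x \<in> (\<Pi>\<^sub>E K\<in>quotients S L. if K = K0 then {K0} else quotients S L)"
  using assms quot_closed[of _ S L x] by (auto simp: tr_def)

lemma card_T:
  assumes "finite Q" "K0 \<in> Q"
  shows "card (\<Pi>\<^sub>E K\<in>Q. if K = K0 then {K0} else Q) = card Q ^ (card Q - 1)"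
proof -
  have "card (\<Pi>\<^sub>E K\<in>Q. if K = K0 then {K0} else Q) = (\<Prod>K\<in>Q. card (if K = K0 then {K0} else Q))"
    using assms by (simp add: card_PiE)
  also have "\<dots> = (\<Prod>K\<in>Q. if K = K0 then 1 else card Q)"
    by (rule prod.cong) auto
  also have "\<dots> = (\<Prod>K\<in>Q - {K0}. card Q)"
    using assms by (simp add: prod.If_cases Int_absorb1 Diff_eq[symmetric])
  also have "\<dots> = card Q ^ (card Q - 1)"
    using assms by (simp add: card_Diff_singleton)
  finally show ?thesis .
qed

lemma sink_exists:
  assumes "L \<subseteq> lists S" "right_ideal S L \<or> prefix_closed L"
  shows "\<exists>K0\<in>quotients S L. \<forall>x\<in>lists S. left_quotient S x K0 = K0"
  using assms(2)
proof
  assume r: "right_ideal S L"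
  then obtain w where w: "w \<in> L" by (auto simp: right_ideal_def)
  then have wS: "w \<in> lists S" using assms by auto
  have "left_quotient S w L = lists S"
  proof -
    have "w @ x \<in> L" if "x \<in> lists S" for x
    proof -
      have "L = {u @ v |u v. u \<in> L \<and> v \<in> lists S}" using r by (simp add: right_ideal_def)
      then show ?thesis using w that by blast
    qed
    then show ?thesis by (auto simp: left_quotient_def)
  qed
  moreover have "left_quotient S x (lists S) = lists S" if "x \<in> lists S" for x
    using that by (auto simp: left_quotient_def)
  ultimately show ?thesis using wS unfolding quotients_def by (metis (mono_tags, lifting) mem_Collect_eq)
next
  assume p: "prefix_closed L"
  show ?thesis
  proof (cases "L = lists S")
    case True
    have "left_quotient S [] L = lists S" using True by (auto simp: left_quotient_def)
    moreover have "left_quotient S x (lists S) = lists S" if "x \<in> lists S" for x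
      using that by (auto simp: left_quotient_def)
    ultimately show ?thesis unfolding quotients_def by (metis (mono_tags, lifting) lists.Nil mem_Collect_eq)
  next
    case False
    then obtain w where w: "w \<in> lists S" "w \<notin> L" using assms(1) by auto
    have "left_quotient S w L = {}"
      using w p by (auto simp: left_quotient_def prefix_closed_def)
    moreover have "left_quotient S x {} = {}" for x by (auto simp: left_quotient_def)
    ultimately show ?thesis using w unfolding quotients_def by (metis (mono_tags, lifting) mem_Collect_eq)
  qed
qed

lemma part1:
  assumes "L \<subseteq> lists S" "right_ideal S L \<or> prefix_closed L" "n \<ge> 1" "quot_complexity S L = n"
  shows "synt_complexity S L \<le> n ^ (n - 1)"
proof -
  obtain K0 where K0: "K0 \<in> quotients S L" "\<forall>x\<in>lists S. left_quotient S x K0 = K0"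
    using sink_exists[OF assms(1,2)] by blast
  have fin: "finite (quotients S L)" and cq: "card (quotients S L) = n"
    using assms(3,4) by (auto simp: quot_complexity_def intro: card_ge_0_finite)
  let ?T = "\<Pi>\<^sub>E K\<in>quotients S L. if K = K0 then {K0} else quotients S L"
  have sub: "tr S L ` (lists S - {[]}) \<subseteq> ?T" using tr_in_T[OF _ K0] by auto
  have "finite ?T" using fin by (auto intro!: finite_PiE)
  then have "card (tr S L ` (lists S - {[]})) \<le> card ?T" using sub by (rule card_mono)
  then show ?thesis using card_T[OF fin K0(1)] cq by (simp add: synt_complexity_eq)
qed



lemma lq_Cons: "w \<in> lists S \<Longrightarrow> left_quotient S (e # w) K = left_quotient S w (left_quotient S [e] K)"
  using lq_append[of w S "[e]" K] by simp

lemma lq_Nil_Q: "K \<in> quotients S L \<Longrightarrow> left_quotient S [] K = K"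
  by (rule lq_Nil[OF quot_sub])

lemma letter_closed: "e \<in> S \<Longrightarrow> K \<in> quotients S L \<Longrightarrow> left_quotient S [e] K \<in> quotients S L"
  by (rule quot_closed) auto

lemma inj_letters:
  assumes fin: "finite (quotients S L)"
  shows "x \<in> lists S \<Longrightarrow> inj_on (left_quotient S x) (quotients S L) \<Longrightarrow> e \<in> set x
     \<Longrightarrow> inj_on (left_quotient S [e]) (quotients S L)"
proof (induction x)
  case Nil then show ?case by simp
next
  case (Cons a w)
  let ?Q = "quotients S L"
  let ?g = "left_quotient S [a]"
  have wS: "w \<in> lists S" and aS: "a \<in> S" using Cons.prems by auto
  have eq: "inj_on (left_quotient S (a # w)) ?Q = inj_on (left_quotient S w \<circ> ?g) ?Q"
    by (rule inj_on_cong) (simp add: lq_Cons[OF wS])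
  have ig: "inj_on ?g ?Q" using Cons.prems(2) eq inj_on_imageI2 by metis
  have gQ: "?g ` ?Q = ?Q" using endo_inj_surj[OF fin _ ig] letter_closed[OF aS] by auto
  have "inj_on (left_quotient S w) ?Q"
    using comp_inj_on_iff[OF ig, of "left_quotient S w"] gQ Cons.prems(2) eq by simp
  then show ?case using Cons wS ig by auto
qed

definition sinkfree where
  "sinkfree Q K0 f \<longleftrightarrow> (\<forall>K\<in>Q. f K = K0 \<longrightarrow> K = K0)"

lemma sinkfree_letters:
  assumes K0: "K0 \<in> quotients S L" "\<forall>x\<in>lists S. left_quotient S x K0 = K0"
  shows "x \<in> lists S \<Longrightarrow> \<forall>e\<in>set x. sinkfree (quotients S L) K0 (left_quotient S [e])
     \<Longrightarrow> sinkfree (quotients S L) K0 (left_quotient S x)"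
proof (induction x)
  case Nil then show ?case by (auto simp: sinkfree_def lq_Nil_Q)
next
  case (Cons a w)
  then have wS: "w \<in> lists S" and aS: "a \<in> S" by auto
  have sw: "sinkfree (quotients S L) K0 (left_quotient S w)" using Cons wS by simp
  have sa: "sinkfree (quotients S L) K0 (left_quotient S [a])" using Cons.prems by simp
  show ?case unfolding sinkfree_def
  proof (intro ballI impI)
    fix K assume K: "K \<in> quotients S L" "left_quotient S (a # w) K = K0"
    have "left_quotient S w (left_quotient S [a] K) = K0" using K(2) by (simp only: lq_Cons[OF wS])
    then have "left_quotient S [a] K = K0" using sw letter_closed[OF aS K(1)] by (simp add: sinkfree_def)
    then show "K = K0" using sa K(1) by (simp add: sinkfree_def)
  qed
qed

lemma sinkfree_noninj_letters:
  assumes fin: "finite (quotients S L)"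
    and K0: "K0 \<in> quotients S L" "\<forall>x\<in>lists S. left_quotient S x K0 = K0"
  shows "x \<in> lists S \<Longrightarrow> sinkfree (quotients S L) K0 (left_quotient S x)
     \<Longrightarrow> \<not> inj_on (left_quotient S x) (quotients S L)
     \<Longrightarrow> \<exists>e\<in>set x. sinkfree (quotients S L) K0 (left_quotient S [e]) \<and>
            \<not> inj_on (left_quotient S [e]) (quotients S L)"
proof (induction x)
  case Nil then show ?case using lq_Nil_Q by (metis inj_on_cong inj_on_id2)
next
  case (Cons a w)
  let ?Q = "quotients S L"
  let ?g = "left_quotient S [a]"
  have wS: "w \<in> lists S" and aS: "a \<in> S" using Cons.prems by auto
  show ?case
  proof (cases "sinkfree ?Q K0 ?g")
    case False
    then obtain K where K: "K \<in> ?Q" "?g K = K0" "K \<noteq> K0" by (auto simp: sinkfree_def)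
    then have "left_quotient S (a # w) K = K0" using K0 wS by (simp add: lq_Cons[OF wS])
    then show ?thesis using Cons.prems(2) K by (auto simp: sinkfree_def)
  next
    case sg: True
    show ?thesis
    proof (cases "inj_on ?g ?Q")
      case False then show ?thesis using sg by auto
    next
      case ig: True
      have eq: "inj_on (left_quotient S (a # w)) ?Q = inj_on (left_quotient S w \<circ> ?g) ?Q"
        by (rule inj_on_cong) (simp add: lq_Cons[OF wS])
      have gQ: "?g ` ?Q = ?Q" using endo_inj_surj[OF fin _ ig] letter_closed[OF aS] by auto
      have ni: "\<not> inj_on (left_quotient S w) ?Q"
        using comp_inj_on_iff[OF ig, of "left_quotient S w"] gQ Cons.prems(3) eq by simp
      have "sinkfree ?Q K0 (left_quotient S w)"
        unfolding sinkfree_def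
      proof (intro ballI impI)
        fix K assume K: "K \<in> ?Q" "left_quotient S w K = K0"
        then obtain K' where K': "K' \<in> ?Q" "K = ?g K'" using gQ by blast
        then have "left_quotient S (a # w) K' = K0" using K wS by (simp add: lq_Cons[OF wS])
        then have "K' = K0" using Cons.prems(2) K' by (auto simp: sinkfree_def)
        then show "K = K0" using K' K0 aS by auto
      qed
      then show ?thesis using Cons.IH wS ni by auto
    qed
  qed
qed

lemma card4: "a \<in> S \<Longrightarrow> b \<in> S \<Longrightarrow> c \<in> S \<Longrightarrow> d \<in> S \<Longrightarrow> finite S \<Longrightarrow>
  a \<noteq> b \<Longrightarrow> a \<noteq> c \<Longrightarrow> a \<noteq> d \<Longrightarrow> b \<noteq> c \<Longrightarrow> b \<noteq> d \<Longrightarrow> c \<noteq> d \<Longrightarrow> 4 \<le> card S"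
  using card_mono[of S "{a,b,c,d}"] by auto

lemma card3: "a \<in> S \<Longrightarrow> b \<in> S \<Longrightarrow> c \<in> S \<Longrightarrow> finite S \<Longrightarrow>
  a \<noteq> b \<Longrightarrow> a \<noteq> c \<Longrightarrow> b \<noteq> c \<Longrightarrow> 3 \<le> card S"
  using card_mono[of S "{a,b,c}"] by auto

lemma card2: "a \<in> S \<Longrightarrow> b \<in> S \<Longrightarrow> finite S \<Longrightarrow> a \<noteq> b \<Longrightarrow> 2 \<le> card S"
  using card_mono[of S "{a,b}"] by auto

lemma part3:
  assumes S: "finite S" "S \<noteq> {}" and LS: "L \<subseteq> lists S" and n: "n \<ge> 1"
    and cS: "card S < min n 4" and qc: "quot_complexity S L = n"
    and ty: "right_ideal S L \<or> prefix_closed L"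
  shows "synt_complexity S L \<noteq> n ^ (n - 1)"
proof
  assume sc: "synt_complexity S L = n ^ (n - 1)"
  let ?Q = "quotients S L"
  obtain K0 where K0: "K0 \<in> ?Q" "\<forall>x\<in>lists S. left_quotient S x K0 = K0"
    using sink_exists[OF LS ty] by blast
  have fin: "finite ?Q" and cq: "card ?Q = n"
    using n qc by (auto simp: quot_complexity_def intro: card_ge_0_finite)
  let ?T = "\<Pi>\<^sub>E K\<in>?Q. if K = K0 then {K0} else ?Q"
  have sub: "tr S L ` (lists S - {[]}) \<subseteq> ?T" using tr_in_T[OF _ K0] by auto
  have finT: "finite ?T" using fin by (auto intro!: finite_PiE)
  have "card (tr S L ` (lists S - {[]})) = card ?T"
    using card_T[OF fin K0(1)] cq sc by (simp add: synt_complexity_eq)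
  then have MT: "tr S L ` (lists S - {[]}) = ?T" using card_subset_eq[OF finT sub] by simp
  have real: "\<exists>x\<in>lists S. x \<noteq> [] \<and> (\<forall>K\<in>?Q. left_quotient S x K = f K)"
    if "f K0 = K0" "\<And>K. K \<in> ?Q \<Longrightarrow> f K \<in> ?Q" for f
  proof -
    have "restrict f ?Q \<in> ?T" using that by (simp add: restrict_PiE_iff)
    then have "restrict f ?Q \<in> tr S L ` (lists S - {[]})" by (simp only: MT)
    then obtain x where "x \<in> lists S - {[]}" "restrict f ?Q = tr S L x" by (rule imageE)
    then have x: "x \<in> lists S" "x \<noteq> []" "tr S L x = restrict f ?Q" by auto
    have "left_quotient S x K = f K" if K: "K \<in> ?Q" for K
    proof -
      have "tr S L x K = restrict f ?Q K" using x(3) by simp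
      then show ?thesis using K by (simp add: tr_def)
    qed
    then show ?thesis using x by blast
  qed
  have cS1: "card S \<ge> 1" using S by (simp add: Suc_leI card_gt_0_iff)
  have n2: "n \<ge> 2" using cS cS1 by auto
  have cQ0: "card (?Q - {K0}) = n - 1" using cq K0 fin by simp
  obtain p where p: "p \<in> ?Q" "p \<noteq> K0"
  proof -
    have "?Q - {K0} \<noteq> {}" using cQ0 n2 by (intro notI) simp
    then show ?thesis using that by blast
  qed
  obtain xc where xc: "xc \<in> lists S" "\<forall>K\<in>?Q. left_quotient S xc K = K0"
    using real[of "\<lambda>_. K0", OF refl K0(1)] by blast
  have "\<not> sinkfree ?Q K0 (left_quotient S xc)" using xc p by (auto simp: sinkfree_def)
  then obtain eB where eB: "eB \<in> S" "\<not> sinkfree ?Q K0 (left_quotient S [eB])"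
    using sinkfree_letters[OF K0 xc(1)] xc(1) by (meson in_listsD)
  obtain xi where xi: "xi \<in> lists S" "xi \<noteq> []" "\<forall>K\<in>?Q. left_quotient S xi K = K"
    using real[of "\<lambda>K. K", OF refl] by blast
  have ixi: "inj_on (left_quotient S xi) ?Q" using xi(3) unfolding inj_on_def by simp
  obtain eP where eP: "eP \<in> set xi" using xi(2) by (cases xi) auto
  have ePS: "eP \<in> S" using eP xi(1) by auto
  have iP: "inj_on (left_quotient S [eP]) ?Q" using inj_letters[OF fin xi(1) ixi eP] .
  have injsf: "sinkfree ?Q K0 (left_quotient S [e])" if "e \<in> S" "inj_on (left_quotient S [e]) ?Q" for e
    unfolding sinkfree_def
  proof (intro ballI impI)
    fix K assume K: "K \<in> ?Q" "left_quotient S [e] K = K0"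
    have "left_quotient S [e] K0 = K0" using K0(2) that(1) by simp
    then show "K = K0" using inj_onD[OF that(2)] K K0(1) by simp
  qed
  have PB: "eP \<noteq> eB" using injsf[OF ePS iP] eB by auto
  show False
  proof (cases "n = 2")
    case True then show ?thesis using card2[OF ePS eB(1) S(1) PB] cS by simp
  next
    case False
    then have n3: "n \<ge> 3" using n2 by simp
    obtain q where q: "q \<in> ?Q" "q \<noteq> K0" "q \<noteq> p"
    proof -
      have "card (?Q - {K0, p}) = n - 2" using cq K0 p fin by (simp add: card_Diff_subset)
      then have "?Q - {K0, p} \<noteq> {}" using n3 by (intro notI) simp
      then show ?thesis using that by blast
    qed
    obtain xe where xe: "xe \<in> lists S" "\<forall>K\<in>?Q. left_quotient S xe K = (if K = q then p else K)"
    proof -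
      have h1: "(if K0 = q then p else K0) = K0" using q by simp
      have h2: "(if K = q then p else K) \<in> ?Q" if "K \<in> ?Q" for K using p that by simp
      show ?thesis using real[of "\<lambda>K. if K = q then p else K", OF h1 h2] that by blast
    qed
    have "sinkfree ?Q K0 (left_quotient S xe)" using xe p by (auto simp: sinkfree_def)
    moreover have "\<not> inj_on (left_quotient S xe) ?Q"
    proof
      assume i: "inj_on (left_quotient S xe) ?Q"
      have "left_quotient S xe q = left_quotient S xe p" using xe(2) q p by simp
      then show False using inj_onD[OF i] q p by blast
    qed
    ultimately obtain eA where eA: "eA \<in> set xe" "sinkfree ?Q K0 (left_quotient S [eA])"
      "\<not> inj_on (left_quotient S [eA]) ?Q"
      using sinkfree_noninj_letters[OF fin K0 xe(1)] by blast
    have eAS: "eA \<in> S" using eA xe(1) by auto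
    have AP: "eA \<noteq> eP" using eA iP by auto
    have AB: "eA \<noteq> eB" using eA eB by auto
    show False
    proof (cases "n = 3")
      case True then show ?thesis using card3[OF ePS eB(1) eAS S(1) PB AP[symmetric] AB[symmetric]] cS by simp
    next
      case False
      then have n4: "n \<ge> 4" using n3 by simp
      obtain r where r: "r \<in> ?Q" "r \<noteq> K0" "r \<noteq> p" "r \<noteq> q"
      proof -
        have "card (?Q - {K0, p, q}) = n - 3" using cq K0 p q fin by (simp add: card_Diff_subset)
        then have "?Q - {K0, p, q} \<noteq> {}" using n4 by (intro notI) simp
        then show ?thesis using that by blast
      qed
      define s1 where "s1 K = (if K = p then q else if K = q then p else K)" for K
      define s2 where "s2 K = (if K = q then r else if K = r then q else K)" for K
      obtain x1 where x1: "x1 \<in> lists S" "\<forall>K\<in>?Q. left_quotient S x1 K = s1 K"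
      proof -
        have h1: "s1 K0 = K0" using p q r by (simp add: s1_def)
        have h2: "s1 K \<in> ?Q" if "K \<in> ?Q" for K using p q r that by (simp add: s1_def)
        show ?thesis using real[of s1, OF h1 h2] that by blast
      qed
      obtain x2 where x2: "x2 \<in> lists S" "\<forall>K\<in>?Q. left_quotient S x2 K = s2 K"
      proof -
        have h1: "s2 K0 = K0" using p q r by (simp add: s2_def)
        have h2: "s2 K \<in> ?Q" if "K \<in> ?Q" for K using p q r that by (simp add: s2_def)
        show ?thesis using real[of s2, OF h1 h2] that by blast
      qed
      have i1: "inj_on (left_quotient S x1) ?Q"
      proof -
        have "inj_on s1 ?Q" unfolding inj_on_def s1_def by auto
        then show ?thesis using x1(2) inj_on_cong[of ?Q "left_quotient S x1" s1] by simp
      qed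
      have i2: "inj_on (left_quotient S x2) ?Q"
      proof -
        have "inj_on s2 ?Q" unfolding inj_on_def s2_def by auto
        then show ?thesis using x2(2) inj_on_cong[of ?Q "left_quotient S x2" s2] by simp
      qed
      have "\<exists>e\<in>S. e \<noteq> eP \<and> inj_on (left_quotient S [e]) ?Q"
      proof (rule ccontr)
        assume "\<not> ?thesis"
        then have only: "\<And>e. e \<in> set x1 \<union> set x2 \<Longrightarrow> e = eP"
          using inj_letters[OF fin x1(1) i1] inj_letters[OF fin x2(1) i2] x1(1) x2(1) by blast
        have "x1 = replicate (length x1) eP" using only by (simp add: replicate_length_same)
        moreover have "x2 = replicate (length x2) eP" using only by (simp add: replicate_length_same)
        ultimately have "x1 @ x2 = x2 @ x1" by (metis replicate_add add.commute)
        then have "left_quotient S x2 (left_quotient S x1 p) = left_quotient S x1 (left_quotient S x2 p)"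
          using lq_append x1(1) x2(1) by metis
        moreover have "left_quotient S x2 (left_quotient S x1 p) = r"
          using x1 x2 p q by (simp add: s1_def s2_def)
        moreover have "left_quotient S x1 (left_quotient S x2 p) = q"
          using x1 x2 p q r by (simp add: s1_def s2_def)
        ultimately show False using r by simp
      qed
      then obtain eP' where eP': "eP' \<in> S" "eP' \<noteq> eP" "inj_on (left_quotient S [eP']) ?Q" by blast
      have "eP' \<noteq> eB" using injsf[OF eP'(1,3)] eB by auto
      moreover have "eP' \<noteq> eA" using eP' eA by auto
      ultimately have "4 \<le> card S"
        using card4[OF ePS eB(1) eAS eP'(1) S(1) PB AP[symmetric]] eP'(2) AB by auto
      then show False using cS by simp
    qed
  qed
qed



definition Acyc :: "nat \<Rightarrow> nat \<Rightarrow> nat" where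
  "Acyc n q = (if 1 \<le> q \<and> q < n - 1 then q + 1 else if q = n - 1 \<and> 1 \<le> q then 1 else q)"
definition Bsw :: "nat \<Rightarrow> nat" where
  "Bsw q = (if q = 1 then 2 else if q = 2 then 1 else q)"
definition Cm :: "nat \<Rightarrow> nat \<Rightarrow> nat" where
  "Cm n q = (if q = n - 1 then 1 else q)"
definition Dk :: "nat \<Rightarrow> nat \<Rightarrow> nat" where
  "Dk n q = (if q = n - 1 then 0 else q)"
definition sw :: "nat \<Rightarrow> nat \<Rightarrow> nat \<Rightarrow> nat" where
  "sw i j q = (if q = i then j else if q = j then i else q)"

definition maps :: "nat \<Rightarrow> (nat \<Rightarrow> nat) \<Rightarrow> bool" where
  "maps n f \<longleftrightarrow> (\<forall>q<n. f q < n)"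

definition cl :: "nat \<Rightarrow> ((nat \<Rightarrow> nat) \<Rightarrow> bool) \<Rightarrow> bool" where
  "cl n P \<longleftrightarrow> (\<forall>f g. P f \<and> (\<forall>q<n. f q = g q) \<longrightarrow> P g) \<and>
              (\<forall>f g. P f \<and> P g \<and> maps n f \<longrightarrow> P (\<lambda>q. g (f q)))"

lemma clE: "cl n P \<Longrightarrow> P f \<Longrightarrow> (\<And>q. q < n \<Longrightarrow> f q = g q) \<Longrightarrow> P g"
  unfolding cl_def by blast

lemma clC: "cl n P \<Longrightarrow> P f \<Longrightarrow> P g \<Longrightarrow> maps n f \<Longrightarrow> P (\<lambda>q. g (f q))"
  unfolding cl_def by blast

lemma maps_sw: "i < n \<Longrightarrow> j < n \<Longrightarrow> maps n (sw i j)"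
  by (simp add: maps_def sw_def)

lemma maps_Acyc: "maps n (Acyc n)" by (auto simp: maps_def Acyc_def)

lemma Acyc_pow:
  assumes "n \<ge> 3" "1 \<le> q" "q \<le> n - 1"
  shows "(Acyc n ^^ k) q = (q - 1 + k) mod (n - 1) + 1"
proof (induction k)
  case 0 then show ?case using assms by simp
next
  case (Suc k)
  define r where "r = (q - 1 + k) mod (n - 1)"
  have r: "r < n - 1" using assms unfolding r_def by simp
  have "(Acyc n ^^ Suc k) q = Acyc n (r + 1)" using Suc by (simp add: r_def)
  also have "\<dots> = (if Suc r = n - 1 then 0 else Suc r) + 1" using r by (auto simp: Acyc_def)
  also have "\<dots> = (q - 1 + Suc k) mod (n - 1) + 1"
    unfolding r_def by (simp add: mod_Suc)
  finally show ?case .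
qed

lemma Acyc_pow_id:
  assumes "n \<ge> 3" "q < n"
  shows "(Acyc n ^^ (n - 1)) q = q"
proof (cases "q = 0")
  case True
  have "(Acyc n ^^ k) 0 = 0" for k by (induction k) (auto simp: Acyc_def)
  then show ?thesis using True by simp
next
  case False
  have "(q - 1 + (n - 1)) mod (n - 1) = (q - 1) mod (n - 1)" by (rule mod_add_self2)
  also have "\<dots> = q - 1" using assms False by simp
  finally show ?thesis using Acyc_pow[of n q "n - 1"] assms False by simp
qed

lemma maps_pow: "maps n f \<Longrightarrow> maps n (f ^^ k)"
  by (induction k) (auto simp: maps_def)

lemma P_pow:
  assumes cl: "cl n P" and Pid: "P id" and Pf: "P f" and mf: "maps n f"
  shows "P (f ^^ k)"
proof (induction k)
  case 0 then show ?case using Pid by (simp add: id_def)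
next
  case (Suc k)
  have "P (\<lambda>q. f ((f ^^ k) q))" using clC[of n P "f ^^ k" f, OF cl Suc.IH Pf maps_pow[OF mf]] .
  then show ?case by (simp add: comp_def)
qed

lemma Acyc_conj:
  assumes "1 \<le> i" "i + 1 < n - 1" "r < n"
  shows "Acyc n (sw i (i + 1) r) = sw (i + 1) (i + 2) (Acyc n r)"
  using assms by (auto simp: Acyc_def sw_def)

context
  fixes n :: nat and P
  assumes n3: "n \<ge> 3" and cl: "cl n P" and PA: "P (Acyc n)" and PB: "P Bsw"
begin

lemma P_id: "P id"
proof -
  have "P (\<lambda>q. Bsw (Bsw q))" by (rule clC[of n P Bsw Bsw, OF cl PB PB]) (use n3 in \<open>auto simp: maps_def Bsw_def\<close>)
  then show ?thesis by (rule clE[OF cl]) (auto simp: Bsw_def)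
qed

lemma P_adj: "1 \<le> i \<Longrightarrow> i < n - 1 \<Longrightarrow> P (sw i (i + 1))"
proof (induction i rule: nat_induct_at_least)
  case base
  show ?case by (rule clE[OF cl PB]) (auto simp: Bsw_def sw_def)
next
  case (Suc i)
  define iv where "iv = Acyc n ^^ (n - 2)"
  have miv: "maps n iv" unfolding iv_def by (rule maps_pow[OF maps_Acyc])
  have Piv: "P iv" unfolding iv_def by (rule P_pow[OF cl P_id PA maps_Acyc])
  have aiv: "Acyc n (iv q) = q" if "q < n" for q
  proof -
    have "Acyc n (iv q) = (Acyc n ^^ Suc (n - 2)) q" by (simp add: iv_def)
    also have "Suc (n - 2) = n - 1" using n3 by simp
    finally show ?thesis using Acyc_pow_id[OF n3 that] by simp
  qed
  have Psi: "P (sw i (i + 1))" using Suc by simp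
  have A1: "P (\<lambda>q. sw i (i + 1) (iv q))" using clC[of n P iv "sw i (i + 1)", OF cl Piv Psi miv] .
  have A2: "maps n (\<lambda>q. sw i (i + 1) (iv q))"
    using miv Suc.prems n3 by (auto simp: maps_def sw_def)
  have "P (\<lambda>q. Acyc n (sw i (i + 1) (iv q)))" using clC[of n P "\<lambda>q. sw i (i + 1) (iv q)" "Acyc n", OF cl A1 PA A2] .
  then show ?case
  proof (rule clE[OF cl])
    fix q assume q: "q < n"
    have "Acyc n (sw i (i + 1) (iv q)) = sw (i + 1) (i + 2) (Acyc n (iv q))"
      using Acyc_conj[of i n "iv q"] Suc miv q by (simp add: maps_def)
    then show "Acyc n (sw i (i + 1) (iv q)) = sw (Suc i) (Suc i + 1) q"
      using aiv[OF q] by simp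
  qed
qed

lemma P_sw_lt0: "1 \<le> i \<Longrightarrow> i + 1 + d \<le> n - 1 \<Longrightarrow> P (sw i (i + 1 + d))"
proof (induction d)
  case 0 then show ?case using P_adj[of i] by simp
next
  case (Suc d)
  define j where "j = i + 1 + d"
  have Pj: "P (sw j (j + 1))" using P_adj[of j] Suc unfolding j_def by simp
  have Pij: "P (sw i j)" using Suc unfolding j_def by simp
  have mj: "maps n (sw j (j + 1))" using Suc n3 unfolding j_def by (intro maps_sw) auto
  have mij: "maps n (sw i j)" using Suc n3 unfolding j_def by (intro maps_sw) auto
  have A1: "P (\<lambda>q. sw i j (sw j (j + 1) q))" using clC[of n P "sw j (j + 1)" "sw i j", OF cl Pj Pij mj] .
  have A2: "maps n (\<lambda>q. sw i j (sw j (j + 1) q))" using mj mij by (simp add: maps_def)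
  have "P (\<lambda>q. sw j (j + 1) (sw i j (sw j (j + 1) q)))" using clC[of n P "\<lambda>q. sw i j (sw j (j + 1) q)" "sw j (j + 1)", OF cl A1 Pj A2] .
  then show ?case by (rule clE[OF cl]) (use Suc in \<open>auto simp: sw_def j_def\<close>)
qed

lemma P_sw_lt: "1 \<le> i \<Longrightarrow> i < j \<Longrightarrow> j \<le> n - 1 \<Longrightarrow> P (sw i j)"
  using P_sw_lt0[of i "j - i - 1"] by simp

lemma P_sw: "1 \<le> i \<Longrightarrow> i \<le> n - 1 \<Longrightarrow> 1 \<le> j \<Longrightarrow> j \<le> n - 1 \<Longrightarrow> P (sw i j)"
proof -
  assume a: "1 \<le> i" "i \<le> n - 1" "1 \<le> j" "j \<le> n - 1"
  consider "i < j" | "i = j" | "j < i" by linarith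
  then show ?thesis
  proof cases
    case 1 then show ?thesis using P_sw_lt a by simp
  next
    case 2 then show ?thesis using P_id by (rule_tac clE[OF cl P_id]) (auto simp: sw_def)
  next
    case 3
    have "P (sw j i)" using P_sw_lt a 3 by simp
    then show ?thesis by (rule clE[OF cl]) (auto simp: sw_def)
  qed
qed

lemma P_perm: assumes "p permutes {1..n-1}" shows "P p"
  using assms finite_atLeastAtMost[of 1 "n - 1"]
proof (induction rule: permutes_induct)
  case id then show ?case by (rule P_id)
next
  case (swap a b p)
  have perm: "p permutes {1..n-1}" by fact
  have Pp: "P p" by fact
  have mp: "maps n p" unfolding maps_def
  proof (intro allI impI)
    fix q assume q: "q < n"
    show "p q < n"
    proof (cases "q \<in> {1..n-1}")
      case True then have "p q \<in> {1..n-1}" using permutes_in_image[OF perm] by simp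
      then show ?thesis using q by auto
    next
      case False then show ?thesis using permutes_not_in[OF perm False] q by simp
    qed
  qed
  have "P (sw a b)" using P_sw swap(1,2) by auto
  then have "P (\<lambda>q. sw a b (p q))" using clC[of n P p "sw a b", OF cl Pp _ mp] by blast
  then show ?case by (rule clE[OF cl]) (simp add: sw_def transpose_def)
qed

end


context
  fixes n :: nat and P
  assumes n3: "n \<ge> 3" and cl: "cl n P" and PA: "P (Acyc n)" and PB: "P Bsw"
    and PC: "P (Cm n)" and PD: "P (Dk n)"
begin

lemma sw_inv: "sw a b (sw a b x) = x" by (simp add: sw_def)
lemma sw_ne: "x \<noteq> c \<Longrightarrow> a \<noteq> c \<Longrightarrow> b \<noteq> c \<Longrightarrow> sw a b x \<noteq> c" by (simp add: sw_def)

definition PM where "PM f \<longleftrightarrow> P f \<and> maps n f"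

lemma PM_comp: "PM f \<Longrightarrow> PM g \<Longrightarrow> PM (\<lambda>q. g (f q))"
  unfolding PM_def using clC[of n P f g, OF cl] by (auto simp: maps_def)

lemma PM_sw: "1 \<le> i \<Longrightarrow> i \<le> n - 1 \<Longrightarrow> 1 \<le> j \<Longrightarrow> j \<le> n - 1 \<Longrightarrow> PM (sw i j)"
  unfolding PM_def using P_sw[OF n3 cl PA PB, of i j] maps_sw[of i n j] n3 by auto

lemma PM_C: "PM (Cm n)" unfolding PM_def using PC n3 by (auto simp: maps_def Cm_def)
lemma PM_D: "PM (Dk n)" unfolding PM_def using PD n3 by (auto simp: maps_def Dk_def)

lemma PM_ext: "PM f \<Longrightarrow> (\<And>q. q < n \<Longrightarrow> f q = g q) \<Longrightarrow> P g"
  unfolding PM_def using clE[OF cl] by blast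

lemma P_merge:
  assumes "1 \<le> i" "i \<le> n - 1" "1 \<le> j" "j \<le> n - 1" "i \<noteq> j"
  shows "P (\<lambda>q. if q = i then j else q)"
proof -
  define j' where "j' = sw i (n - 1) j"
  have j': "1 \<le> j'" "j' \<le> n - 1" "j' \<noteq> n - 1" using assms unfolding j'_def sw_def by auto
  have s1: "PM (sw i (n - 1))" using PM_sw assms n3 by simp
  have s2: "PM (sw 1 j')" using PM_sw j' n3 by simp
  have "PM (\<lambda>q. sw i (n - 1) (sw 1 j' (Cm n (sw 1 j' (sw i (n - 1) q)))))"
    using PM_comp[OF PM_comp[OF PM_comp[OF PM_comp[OF s1 s2] PM_C] s2] s1] .
  then show ?thesis
  proof (rule PM_ext)
    fix q assume q: "q < n"
    show "sw i (n - 1) (sw 1 j' (Cm n (sw 1 j' (sw i (n - 1) q)))) = (if q = i then j else q)"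
    proof (cases "q = i")
      case True
      have "sw i (n - 1) q = n - 1" using True by (simp add: sw_def)
      moreover have "sw 1 j' (n - 1) = n - 1" using j' n3 by (simp add: sw_def)
      moreover have "Cm n (n - 1) = 1" by (simp add: Cm_def)
      moreover have "sw 1 j' 1 = j'" by (simp add: sw_def)
      moreover have "sw i (n - 1) j' = j" unfolding j'_def by (rule sw_inv)
      ultimately show ?thesis using True by simp
    next
      case False
      have a: "sw i (n - 1) q \<noteq> n - 1" using False assms by (auto simp: sw_def)
      have b: "sw 1 j' (sw i (n - 1) q) \<noteq> n - 1" using sw_ne[OF a] j' n3 by simp
      have "Cm n (sw 1 j' (sw i (n - 1) q)) = sw 1 j' (sw i (n - 1) q)" using b by (simp add: Cm_def)
      then show ?thesis using False by (simp add: sw_inv)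
    qed
  qed
qed

lemma P_kill:
  assumes "1 \<le> i" "i \<le> n - 1"
  shows "P (\<lambda>q. if q = i then 0 else q)"
proof -
  have s1: "PM (sw i (n - 1))" using PM_sw assms n3 by simp
  have "PM (\<lambda>q. sw i (n - 1) (Dk n (sw i (n - 1) q)))"
    using PM_comp[OF PM_comp[OF s1 PM_D] s1] .
  then show ?thesis
  proof (rule PM_ext)
    fix q assume q: "q < n"
    show "sw i (n - 1) (Dk n (sw i (n - 1) q)) = (if q = i then 0 else q)"
    proof (cases "q = i")
      case True then show ?thesis using assms by (simp add: sw_def Dk_def)
    next
      case False
      have a: "sw i (n - 1) q \<noteq> n - 1" using False assms by (auto simp: sw_def)
      then show ?thesis using False by (simp add: Dk_def sw_inv)
    qed
  qed
qed

lemma stage1: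
  "f 0 = 0 \<Longrightarrow> \<forall>q\<in>{1..n-1}. f q \<in> {1..n-1} \<Longrightarrow> P f"
proof (induction "n - 1 - card (f ` {1..n-1})" arbitrary: f rule: less_induct)
  case less
  let ?R = "{1..n-1}"
  have fR: "f ` ?R \<subseteq> ?R" using less.prems(2) by auto
  show ?case
  proof (cases "inj_on f ?R")
    case True
    define p where "p q = (if q \<in> ?R then f q else q)" for q
    have ip: "inj_on p ?R" using True unfolding inj_on_def p_def by simp
    have "p ` ?R = f ` ?R" by (auto simp: p_def)
    also have "f ` ?R = ?R" using endo_inj_surj[OF _ fR True] by simp
    finally have pR: "p ` ?R = ?R" .
    have bij: "bij_betw p ?R ?R" unfolding bij_betw_def using ip pR by blast
    have fx: "\<And>x. x \<notin> ?R \<Longrightarrow> p x = x" unfolding p_def by (simp only: if_False)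
    have "p permutes ?R" using bij_imp_permutes[OF bij fx] .
    then have "P p" by (rule P_perm[OF n3 cl PA PB])
    then show ?thesis
    proof (rule clE[OF cl])
      fix q assume "q < n"
      show "p q = f q" using less.prems(1) \<open>q < n\<close> by (cases "q = 0") (auto simp: p_def)
    qed
  next
    case False
    then obtain i j where ij: "i \<in> ?R" "j \<in> ?R" "i \<noteq> j" "f i = f j"
      unfolding inj_on_def by blast
    have cne: "card (f ` ?R) \<noteq> card ?R" using False eq_card_imp_inj_on[of ?R f] by auto
    have cle: "card (f ` ?R) \<le> card ?R" using card_mono[OF _ fR] by simp
    have "f ` ?R \<noteq> ?R" using cne by auto
    then obtain y where y: "y \<in> ?R" "y \<notin> f ` ?R" using fR by blast
    define f' where "f' = f(i := y)"
    have im1: "f ` (?R - {i}) = f ` ?R"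
    proof
      show "f ` ?R \<subseteq> f ` (?R - {i})"
      proof
        fix z assume "z \<in> f ` ?R"
        then obtain x where x: "x \<in> ?R" "z = f x" by blast
        show "z \<in> f ` (?R - {i})"
        proof (cases "x = i")
          case True then show ?thesis using x ij by (intro image_eqI[of _ _ j]) auto
        next
          case False then show ?thesis using x by blast
        qed
      qed
    qed auto
    have "f' ` ?R = insert y (f ` (?R - {i}))"
    proof -
      have "?R = insert i (?R - {i})" using ij by blast
      then have "f' ` ?R = insert (f' i) (f' ` (?R - {i}))" by (metis image_insert)
      moreover have "f' ` (?R - {i}) = f ` (?R - {i})" unfolding f'_def by auto
      ultimately show ?thesis unfolding f'_def by simp
    qed
    then have im: "f' ` ?R = insert y (f ` ?R)" using im1 by simp
    have cf: "card (f' ` ?R) = Suc (card (f ` ?R))" using im y by simp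
    have cR: "card ?R = n - 1" by simp
    have c1: "card (f ` ?R) < n - 1" using cne cle cR by linarith
    have lt: "n - 1 - card (f' ` ?R) < n - 1 - card (f ` ?R)"
      unfolding cf using c1 by linarith
    have Pf': "P f'"
      by (rule less.hyps[OF lt]) (use less.prems ij y in \<open>auto simp: f'_def\<close>)
    have mf': "maps n f'" unfolding maps_def
    proof (intro allI impI)
      fix q assume q: "q < n"
      show "f' q < n"
      proof (cases "q = i")
        case True then show ?thesis using y n3 by (simp add: f'_def, linarith)
      next
        case False
        show ?thesis
        proof (cases "q = 0")
          case True then show ?thesis using less.prems(1) n3 \<open>q \<noteq> i\<close> by (simp add: f'_def)
        next
          case False
          then have "q \<in> ?R" using q by simp
          then have "f q \<in> ?R" using less.prems(2) by blast
          then show ?thesis using \<open>q \<noteq> i\<close> n3 by (simp add: f'_def, linarith)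
        qed
      qed
    qed
    have PMe: "PM (\<lambda>q. if q = i then j else q)"
      unfolding PM_def using P_merge ij by (auto simp: maps_def)
    have "PM (\<lambda>q. f' (if q = i then j else q))" using PM_comp[OF PMe] Pf' mf' PM_def by blast
    then show ?thesis
    proof (rule PM_ext)
      fix q assume "q < n"
      show "f' (if q = i then j else q) = f q" using ij unfolding f'_def by auto
    qed
  qed
qed

lemma stage2:
  "f 0 = 0 \<Longrightarrow> maps n f \<Longrightarrow> P f"
proof (induction "card {q \<in> {1..n-1}. f q = 0}" arbitrary: f rule: less_induct)
  case less
  let ?Z = "{q \<in> {1..n-1}. f q = 0}"
  show ?case
  proof (cases "?Z = {}")
    case True
    have "\<forall>q\<in>{1..n-1}. f q \<in> {1..n-1}"
    proof
      fix q assume q: "q \<in> {1..n-1}"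
      have "q \<notin> ?Z" by (simp only: True empty_iff not_False_eq_True)
      then have "f q \<noteq> 0" using q by simp
      moreover have "f q < n" using less.prems(2) q n3 by (auto simp: maps_def)
      ultimately show "f q \<in> {1..n-1}" by auto
    qed
    then show ?thesis using stage1 less.prems(1) by blast
  next
    case False
    then obtain i where i: "i \<in> {1..n-1}" "f i = 0" by blast
    define f' where "f' = f(i := i)"
    have Z': "{q \<in> {1..n-1}. f' q = 0} = ?Z - {i}" using i unfolding f'_def by auto
    have lt: "card {q \<in> {1..n-1}. f' q = 0} < card ?Z"
      unfolding Z' using i by (intro psubset_card_mono) auto
    have mf': "maps n f'" using less.prems(2) i unfolding maps_def f'_def by auto
    have f'0: "f' 0 = 0" using less.prems(1) i by (simp add: f'_def)
    have Pf': "P f'" using less.hyps[OF lt f'0 mf'] .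
    have PMk: "PM (\<lambda>q. if q = i then 0 else q)"
      unfolding PM_def using P_kill i by (auto simp: maps_def)
    have "PM (\<lambda>q. f' (if q = i then 0 else q))" using PM_comp[OF PMk] Pf' mf' PM_def by blast
    then show ?thesis
    proof (rule PM_ext)
      fix q assume "q < n"
      show "f' (if q = i then 0 else q) = f q" using i less.prems(1) unfolding f'_def by auto
    qed
  qed
qed

end


lemma card_image_kernel:
  assumes "\<And>x y. x \<in> A \<Longrightarrow> y \<in> A \<Longrightarrow> F x = F y \<longleftrightarrow> G x = G y"
  shows "card (F ` A) = card (G ` A)"
proof -
  define R where "R = {(x, y). x \<in> A \<and> y \<in> A \<and> F x = F y}"
  have "card (A // R) = card (F ` A)"
    by (rule card_quotient_kernel[where B = A]) (auto simp: R_def)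
  moreover have "card (A // R) = card (G ` A)"
    by (rule card_quotient_kernel[where B = A]) (auto simp: R_def assms)
  ultimately show ?thesis by simp
qed

definition run :: "('a \<Rightarrow> nat \<Rightarrow> nat) \<Rightarrow> nat \<Rightarrow> 'a list \<Rightarrow> nat" where
  "run lf q w = foldl (\<lambda>q e. lf e q) q w"

lemma run_append: "run lf q (x @ y) = run lf (run lf q x) y"
  by (simp add: run_def)

lemma run_Nil[simp]: "run lf q [] = q" by (simp add: run_def)

context
  fixes S :: "'a set" and n :: nat and lf :: "'a \<Rightarrow> nat \<Rightarrow> nat"
  assumes n1: "n \<ge> 1"
    and fix0: "\<And>e. lf e 0 = 0"
    and mp: "\<And>e q. q < n \<Longrightarrow> lf e q < n"
    and gen: "\<And>f. f 0 = 0 \<Longrightarrow> maps n f \<Longrightarrow> \<exists>x\<in>lists S. x \<noteq> [] \<and> (\<forall>q<n. run lf q x = f q)"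
begin

definition Lang where "Lang q = {x \<in> lists S. run lf q x = 0}"
definition LL where "LL = Lang (n - 1)"

lemma run0: "run lf 0 x = 0"
  unfolding run_def by (induction x rule: rev_induct) (auto simp: fix0)

lemma run_lt: "q < n \<Longrightarrow> run lf q x < n"
  unfolding run_def by (induction x rule: rev_induct) (auto simp: mp)

lemma lq_Lang: "x \<in> lists S \<Longrightarrow> left_quotient S x (Lang q) = Lang (run lf q x)"
  by (auto simp: left_quotient_def Lang_def run_append)

lemma reach: "q < n \<Longrightarrow> \<exists>w\<in>lists S. run lf (n - 1) w = q"
proof (cases "n = 1")
  case True
  assume "q < n" then have "q = n - 1" using True by simp
  then show ?thesis by (intro bexI[of _ "[]"]) auto
next
  case False
  assume q: "q < n"
  define f where "f p = (if p = 0 then 0 else q)" for p :: nat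
  have "f 0 = 0" "maps n f" using q by (auto simp: f_def maps_def)
  then obtain x where "x \<in> lists S" "\<forall>p<n. run lf p x = f p" using gen by blast
  moreover have "f (n - 1) = q" using False n1 by (simp add: f_def)
  ultimately show ?thesis using n1 by (metis diff_less zero_less_one less_le_trans)
qed

lemma Lang_inj: "inj_on Lang {0..<n}"
proof (rule inj_onI, rule ccontr)
  fix p q assume p: "p \<in> {0..<n}" and q: "q \<in> {0..<n}" and eq: "Lang p = Lang q" and ne: "p \<noteq> q"
  show False
  proof (cases "p = 0 \<or> q = 0")
    case True
    then show False using eq ne by (auto simp: Lang_def set_eq_iff dest: spec[of _ "[]"])
  next
    case False
    define f where "f r = (if r = p then 0 else r)" for r
    have "f 0 = 0" "maps n f" using False by (auto simp: f_def maps_def)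
    then obtain x where x: "x \<in> lists S" "\<forall>r<n. run lf r x = f r" using gen by blast
    then have "x \<in> Lang p" using p by (auto simp: Lang_def f_def)
    moreover have "x \<notin> Lang q" using x q ne False by (auto simp: Lang_def f_def)
    ultimately show False using eq by simp
  qed
qed

lemma quots: "quotients S LL = Lang ` {0..<n}"
proof
  show "quotients S LL \<subseteq> Lang ` {0..<n}"
  proof
    fix K assume "K \<in> quotients S LL"
    then obtain w where w: "w \<in> lists S" "K = left_quotient S w LL" by (auto simp: quotients_def)
    then have "K = Lang (run lf (n - 1) w)" by (simp add: LL_def lq_Lang)
    moreover have "run lf (n - 1) w < n" using n1 by (intro run_lt) simp
    ultimately show "K \<in> Lang ` {0..<n}" by simp
  qed
next
  show "Lang ` {0..<n} \<subseteq> quotients S LL"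
  proof
    fix K assume "K \<in> Lang ` {0..<n}"
    then obtain q where q: "q < n" "K = Lang q" by auto
    then obtain w where w: "w \<in> lists S" "run lf (n - 1) w = q" using reach by blast
    then have "K = left_quotient S w LL" using q by (simp add: LL_def lq_Lang)
    then show "K \<in> quotients S LL" using w unfolding quotients_def by blast
  qed
qed

lemma qc: "quot_complexity S LL = n"
  unfolding quot_complexity_def quots using card_image[OF Lang_inj] by simp

lemma ri: "right_ideal S LL"
  unfolding right_ideal_def
proof
  obtain w where w: "w \<in> lists S" "run lf (n - 1) w = 0" using reach[of 0] n1 by auto
  then show "LL \<noteq> {}" by (auto simp: LL_def Lang_def)
next
  show "LL = {u @ v |u v. u \<in> LL \<and> v \<in> lists S}"
  proof
    show "LL \<subseteq> {u @ v |u v. u \<in> LL \<and> v \<in> lists S}"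
    proof
      fix x assume "x \<in> LL"
      then show "x \<in> {u @ v |u v. u \<in> LL \<and> v \<in> lists S}"
        by (intro CollectI exI[of _ x] exI[of _ "[]"]) simp
    qed
  next
    show "{u @ v |u v. u \<in> LL \<and> v \<in> lists S} \<subseteq> LL"
      by (auto simp: LL_def Lang_def run_append run0)
  qed
qed

lemma LL_sub: "LL \<subseteq> lists S" by (auto simp: LL_def Lang_def)

lemma sc: "synt_complexity S LL = n ^ (n - 1)"
proof -
  let ?A = "lists S - {[]}"
  define g where "g x = restrict (\<lambda>q. run lf q x) {0..<n}" for x
  have "card (tr S LL ` ?A) = card (g ` ?A)"
  proof (rule card_image_kernel)
    fix x y assume x: "x \<in> ?A" and y: "y \<in> ?A"
    have r: "restrict f A = restrict g A \<longleftrightarrow> (\<forall>a\<in>A. f a = g a)" for f g :: "'a list set \<Rightarrow> 'a list set" and A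
      by (auto simp: restrict_def fun_eq_iff)
    have "tr S LL x = tr S LL y \<longleftrightarrow> (\<forall>K\<in>Lang ` {0..<n}. left_quotient S x K = left_quotient S y K)"
      unfolding tr_def quots r ..
    also have "\<dots> \<longleftrightarrow> (\<forall>q\<in>{0..<n}. left_quotient S x (Lang q) = left_quotient S y (Lang q))"
      by (rule ball_simps(9))
    also have "\<dots> \<longleftrightarrow> (\<forall>q<n. Lang (run lf q x) = Lang (run lf q y))"
      using x y by (auto simp: lq_Lang)
    also have "\<dots> \<longleftrightarrow> (\<forall>q<n. run lf q x = run lf q y)"
      using inj_onD[OF Lang_inj] run_lt by auto
    also have "\<dots> \<longleftrightarrow> g x = g y" by (auto simp: g_def restrict_def fun_eq_iff)
    finally show "tr S LL x = tr S LL y \<longleftrightarrow> g x = g y" .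
  qed
  moreover have "g ` ?A = (\<Pi>\<^sub>E q\<in>{0..<n}. if q = 0 then {0} else {0..<n})"
  proof
    show "g ` ?A \<subseteq> (\<Pi>\<^sub>E q\<in>{0..<n}. if q = 0 then {0} else {0..<n})"
      using run0 run_lt by (auto simp: g_def)
  next
    show "(\<Pi>\<^sub>E q\<in>{0..<n}. if q = 0 then {0} else {0..<n}) \<subseteq> g ` ?A"
    proof
      fix f assume f: "f \<in> (\<Pi>\<^sub>E q\<in>{0..<n}. if q = 0 then {0} else {0..<n})"
      have fm: "f q \<in> (if q = 0 then {0} else {0..<n})" if "q < n" for q
        using PiE_mem[OF f, of q] that by simp
      have "f 0 = 0" using fm[of 0] n1 by simp
      moreover have "maps n f" unfolding maps_def
      proof (intro allI impI)
        fix q assume q: "q < n"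
        show "f q < n" using fm[OF q] q by (cases "q = 0") auto
      qed
      ultimately obtain x where x: "x \<in> lists S" "x \<noteq> []" "\<forall>q<n. run lf q x = f q" using gen by blast
      have "g x = f" using x f by (auto simp: g_def restrict_def fun_eq_iff PiE_def extensional_def)
      then show "f \<in> g ` ?A" using x by blast
    qed
  qed
  ultimately have "card (tr S LL ` ?A) = card (\<Pi>\<^sub>E q\<in>{0..<n}. if q = 0 then {0} else {0..<n})" by simp
  also have "\<dots> = n ^ (n - 1)" using card_T[of "{0..<n}" 0] n1 by simp
  finally show ?thesis by (simp add: synt_complexity_eq)
qed

end

lemma complement_ok:
  assumes "L \<subseteq> lists S" "right_ideal S L"
  shows "prefix_closed (lists S - L)" "quot_complexity S (lists S - L) = quot_complexity S L"
    "synt_complexity S (lists S - L) = synt_complexity S L"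
proof -
  show "prefix_closed (lists S - L)"
  proof (unfold prefix_closed_def, intro ballI allI impI)
    fix w u v assume w: "w \<in> lists S - L" "w = u @ v"
    have eqL: "L = {u @ v |u v. u \<in> L \<and> v \<in> lists S}" using assms(2) by (simp add: right_ideal_def)
    have "u \<notin> L"
    proof
      assume u: "u \<in> L"
      have "v \<in> lists S" using w by auto
      then have "w \<in> {u @ v |u v. u \<in> L \<and> v \<in> lists S}" using u w(2) by blast
      then have "w \<in> L" by (simp only: eqL[symmetric])
      then show False using w(1) by simp
    qed
    then show "u \<in> lists S - L" using w by auto
  qed
  have lqc: "left_quotient S w (lists S - L) = lists S - left_quotient S w L" if "w \<in> lists S" for w
    using that by (auto simp: left_quotient_def)
  have "quotients S (lists S - L) = (\<lambda>K. lists S - K) ` quotients S L"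
    unfolding quotients_def using lqc by auto
  moreover have "inj_on (\<lambda>K. lists S - K) (quotients S L)"
    by (rule inj_onI) (use quot_sub in blast)
  ultimately show "quot_complexity S (lists S - L) = quot_complexity S L"
    unfolding quot_complexity_def by (simp add: card_image)
  have "synt_cong S (lists S - L) = synt_cong S L"
    unfolding synt_cong_def by auto
  then show "synt_complexity S (lists S - L) = synt_complexity S L"
    by (simp add: synt_complexity_def)
qed



definition gens :: "nat \<Rightarrow> (nat \<Rightarrow> nat) list" where
  "gens n = (if 4 \<le> n then [Acyc n, Bsw, Cm n, Dk n] else if n = 3 then [Bsw, Cm n, Dk n]
             else if n = 2 then [Dk n, id] else [id])"

lemma length_gens: "n \<ge> 1 \<Longrightarrow> length (gens n) = min n 4"
  by (auto simp: gens_def)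

lemma gens_fix0: "i < length (gens n) \<Longrightarrow> (gens n ! i) 0 = 0"
  by (auto simp: gens_def Acyc_def Bsw_def Cm_def Dk_def nth_Cons split: nat.splits)

lemma gens_maps: "n \<ge> 1 \<Longrightarrow> i < length (gens n) \<Longrightarrow> q < n \<Longrightarrow> (gens n ! i) q < n"
  unfolding gens_def
  by (auto simp: Acyc_def Bsw_def Cm_def Dk_def nth_Cons split: nat.splits if_splits)

lemma existence:
  assumes S: "finite S" and n: "n \<ge> 1" and cS: "card S \<ge> min n 4"
  shows "\<exists>L. L \<subseteq> lists S \<and> right_ideal S L \<and> quot_complexity S L = n \<and> synt_complexity S L = n ^ (n - 1)"
proof -
  define k where "k = min n 4"
  obtain S' where S': "S' \<subseteq> S" "card S' = k" "finite S'"
    using obtain_subset_with_card_n[of k S] cS k_def by blast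
  obtain h where h: "bij_betw h {0..<k} S'" using ex_bij_betw_nat_finite[OF S'(3)] S'(2) by auto
  have lk: "length (gens n) = k" using length_gens[OF n] k_def by simp
  define lf where "lf e = (if e \<in> S' then gens n ! (inv_into {0..<k} h e) else id)" for e
  have inv_lt: "inv_into {0..<k} h e < k" if "e \<in> S'" for e
    using h that by (metis atLeastLessThan_iff bij_betw_def inv_into_into)
  have fix0: "lf e 0 = 0" for e
    unfolding lf_def using gens_fix0 inv_lt lk by auto
  have mp: "lf e q < n" if "q < n" for e q
    unfolding lf_def using gens_maps[OF n] inv_lt lk that by auto
  have lett: "lf (h i) = gens n ! i" "h i \<in> S" if "i < k" for i
  proof -
    have hi: "h i \<in> S'" using h that by (auto simp: bij_betw_def)
    have "inv_into {0..<k} h (h i) = i" using h that by (auto simp: bij_betw_def)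
    then show "lf (h i) = gens n ! i" using hi by (simp add: lf_def)
    show "h i \<in> S" using hi S'(1) by auto
  qed
  define P where "P f \<longleftrightarrow> (\<exists>x\<in>lists S. x \<noteq> [] \<and> (\<forall>q<n. run lf q x = f q))" for f
  have cl: "cl n P"
    unfolding cl_def
  proof (intro conjI allI impI)
    fix f g assume "P f \<and> (\<forall>q<n. f q = g q)"
    then show "P g" unfolding P_def by auto
  next
    fix f g assume a: "P f \<and> P g \<and> maps n f"
    then obtain x y where x: "x \<in> lists S" "x \<noteq> []" "\<forall>q<n. run lf q x = f q"
      and y: "y \<in> lists S" "y \<noteq> []" "\<forall>q<n. run lf q y = g q" unfolding P_def by blast
    have "\<forall>q<n. run lf q (x @ y) = g (f q)"
      using x y a by (auto simp: run_append maps_def)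
    then show "P (\<lambda>q. g (f q))" unfolding P_def using x y by (intro bexI[of _ "x @ y"]) auto
  qed
  have Pg: "P (gens n ! i)" if "i < k" for i
    unfolding P_def using lett[OF that] by (intro bexI[of _ "[h i]"]) (auto simp: run_def)
  have gen: "P f" if f0: "f 0 = 0" and mf: "maps n f" for f
  proof -
    consider "n \<ge> 4" | "n = 3" | "n = 2" | "n = 1" using n by linarith
    then show ?thesis
    proof cases
      case 1
      then have kk: "k = 4" using k_def by simp
      have "P (Acyc n)" "P Bsw" "P (Cm n)" "P (Dk n)"
        using Pg[of 0] Pg[of 1] Pg[of 2] Pg[of 3] 1 kk by (simp_all add: gens_def)
      then show ?thesis using stage2[of n P f] 1 cl f0 mf by simp
    next
      case 2
      then have kk: "k = 3" using k_def by simp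
      have PB: "P Bsw" "P (Cm n)" "P (Dk n)"
        using Pg[of 0] Pg[of 1] Pg[of 2] 2 kk by (simp_all add: gens_def)
      have "P (Acyc n)" using PB(1) by (rule clE[OF cl]) (use 2 in \<open>auto simp: Acyc_def Bsw_def\<close>)
      then show ?thesis using stage2[of n P f] 2 cl f0 mf PB by simp
    next
      case 3
      then have kk: "k = 2" using k_def by simp
      have PD: "P (Dk n)" "P id" using Pg[of 0] Pg[of 1] 3 kk by (simp_all add: gens_def)
      show ?thesis
      proof (cases "f 1 = 0")
        case True
        show ?thesis using PD(1)
        proof (rule clE[OF cl])
          fix q assume "q < n"
          then have "q = 0 \<or> q = 1" using 3 by auto
          then show "Dk n q = f q" using True f0 3 by (auto simp: Dk_def)
        qed
      next
        case False
        have "f 1 < 2" using mf 3 by (auto simp: maps_def)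
        then have f1: "f 1 = 1" using False by simp
        show ?thesis using PD(2)
        proof (rule clE[OF cl])
          fix q assume "q < n"
          then have "q = 0 \<or> q = 1" using 3 by auto
          then show "id q = f q" using f1 f0 by auto
        qed
      qed
    next
      case 4
      then have kk: "k = 1" using k_def by simp
      have "P id" using Pg[of 0] 4 kk by (simp_all add: gens_def)
      then show ?thesis by (rule clE[OF cl]) (use 4 f0 in auto)
    qed
  qed
  have gen': "\<exists>x\<in>lists S. x \<noteq> [] \<and> (\<forall>q<n. run lf q x = f q)" if "f 0 = 0" "maps n f" for f
    using gen[OF that] unfolding P_def .
  show ?thesis
    using LL_sub[OF n fix0 mp gen'] ri[OF n fix0 mp gen'] qc[OF n fix0 mp gen'] sc[OF n fix0 mp gen']
    by blast
qed


theorem theorem2: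
  shows "(\<forall>(S :: 'a set) L n. finite S \<and> S \<noteq> {} \<and> L \<subseteq> lists S \<and> n \<ge> 1 \<and>
            quot_complexity S L = n \<and> (right_ideal S L \<or> prefix_closed L)
            \<longrightarrow> synt_complexity S L \<le> n ^ (n - 1))
       \<and> (\<forall>(S :: 'a set) n. finite S \<and> n \<ge> 1 \<and> card S \<ge> min n 4 \<longrightarrow>
            (\<exists>L. L \<subseteq> lists S \<and> right_ideal S L \<and> quot_complexity S L = n
                 \<and> synt_complexity S L = n ^ (n - 1))
          \<and> (\<exists>L. L \<subseteq> lists S \<and> prefix_closed L \<and> quot_complexity S L = n
                 \<and> synt_complexity S L = n ^ (n - 1)))
       \<and> (\<forall>(S :: 'a set) L n. finite S \<and> S \<noteq> {} \<and> L \<subseteq> lists S \<and> n \<ge> 1 \<and>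
            card S < min n 4 \<and> quot_complexity S L = n \<and> (right_ideal S L \<or> prefix_closed L)
            \<longrightarrow> synt_complexity S L \<noteq> n ^ (n - 1))"
proof (intro conjI allI impI)
  fix S :: "'a set" and L n
  assume a: "finite S \<and> S \<noteq> {} \<and> L \<subseteq> lists S \<and> n \<ge> 1 \<and>
            quot_complexity S L = n \<and> (right_ideal S L \<or> prefix_closed L)"
  then show "synt_complexity S L \<le> n ^ (n - 1)" using part1[of L S n] by blast
next
  fix S :: "'a set" and n
  assume a: "finite S \<and> n \<ge> 1 \<and> card S \<ge> min n 4"
  then obtain L where L: "L \<subseteq> lists S" "right_ideal S L" "quot_complexity S L = n"
     "synt_complexity S L = n ^ (n - 1)" using existence[of S n] by blast
  then show "\<exists>L. L \<subseteq> lists S \<and> right_ideal S L \<and> quot_complexity S L = n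
                 \<and> synt_complexity S L = n ^ (n - 1)" by blast
  have "lists S - L \<subseteq> lists S" by blast
  then show "\<exists>L. L \<subseteq> lists S \<and> prefix_closed L \<and> quot_complexity S L = n
                 \<and> synt_complexity S L = n ^ (n - 1)"
    using complement_ok[OF L(1,2)] L(3,4) by metis
next
  fix S :: "'a set" and L n
  assume a: "finite S \<and> S \<noteq> {} \<and> L \<subseteq> lists S \<and> n \<ge> 1 \<and>
            card S < min n 4 \<and> quot_complexity S L = n \<and> (right_ideal S L \<or> prefix_closed L)"
  then show "synt_complexity S L \<noteq> n ^ (n - 1)" using part3[of S L n] by blast
qed

end
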